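(* Let $f$ be a $C$-class classifier with $C\ge 2$ whose outputs satisfy $f(x)\in(0,1)^C$, $\sum_c f(x)_c=1$ for all $x$, and let $S$, $\mathcal{D}$ be as in the context. Let $\mathcal{Q}_{cvx}$ be the family of all convex subsets of $\mathbb{R}^{2C}$. For every threshold $\tau\in\mathbb{R}$ and every $m\in\{m_{msp,\tau},m_{ent,\tau},m_{ce,\tau},m_{me,\tau}\}$, $$\mathrm{Adv}(m;f,S,\mathcal{D})\le D_{\mathcal{Q}_{cvx}}(S,\mathcal{D}).$$
   Context: A labeled data point is $z=(x,y)$ with $y\in\{0,1\}^C$ one-hot; $f(x)_c$ denotes the $c$-th coordinate of $f(x)$. $S$ is a finite training set (multiset) of labeled points, $\mathbb{P}_{z\sim S}$ is uniform over $S$, and $\mathcal{D}$ is a probability distribution on labeled points. An MIA is a map $m(z,f)\in\{0,1\}$ with advantage $\mathrm{Adv}(m;f,S,\mathcal{D}):=\mathbb{P}_{z\sim S}(m(z,f)=1)-\mathbb{P}_{z\sim\mathcal{D}}(m(z,f)=1)$. For a score function $h$ and threshold $\tau$, the thresholded MIA is $m_{h,\tau}(z,f)=\mathbb{1}[h(z,f)<\tau]$. The scores are: $msp(z,f)=-\max_{c\in[C]}f(x)_c$; $ent(z,f)=-\sum_{c\in[C]}f(x)_c\log f(x)_c$; $ce(z,f)=-\sum_{c\in[C]}y_c\log f(x)_c$; $me(z,f)=-\sum_{c\in[C]}\big((1-f(x)_c)\log(f(x)_c)\,y_c+f(x)_c\log(1-f(x)_c)\,(1-y_c)\big)$. For $Q\subseteq\mathbb{R}^{2C}$,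 $D(S,\mathcal{D}\mid Q):=\left|\mathbb{P}_{(x,y)\sim S}((f(x),y)\in Q)-\mathbb{P}_{(x,y)\sim\mathcal{D}}((f(x),y)\in Q)\right|$, and for a family $\mathcal{Q}$, $D_{\mathcal{Q}}(S,\mathcal{D}):=\sup_{Q\in\mathcal{Q}}D(S,\mathcal{D}\mid Q)$. *)

theory Defs
  imports "HOL-Probability.Probability" "HOL-Library.Multiset"
begin

text \<open>Labeled points z = (x, y) with x :: 'x and y :: real^'c (C = CARD('c) classes).
  The classifier output f x :: real^'c; R^{2C} is rendered as real^'c \<times> real^'c.\<close>

definition one_hot :: "real^'c::finite \<Rightarrow> bool" where
  "one_hot y \<longleftrightarrow> (\<forall>c. y $ c = 0 \<or> y $ c = 1) \<and> (\<Sum>c\<in>UNIV. y $ c) = 1"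

definition msp :: "('x \<times> (real^'c::finite)) \<Rightarrow> ('x \<Rightarrow> real^'c) \<Rightarrow> real" where
  "msp z f = - (MAX c. f (fst z) $ c)"

definition ent :: "('x \<times> (real^'c::finite)) \<Rightarrow> ('x \<Rightarrow> real^'c) \<Rightarrow> real" where
  "ent z f = - (\<Sum>c\<in>UNIV. f (fst z) $ c * ln (f (fst z) $ c))"

definition ce :: "('x \<times> (real^'c::finite)) \<Rightarrow> ('x \<Rightarrow> real^'c) \<Rightarrow> real" where
  "ce z f = - (\<Sum>c\<in>UNIV. snd z $ c * ln (f (fst z) $ c))"

definition me :: "('x \<times> (real^'c::finite)) \<Rightarrow> ('x \<Rightarrow> real^'c) \<Rightarrow> real" where
  "me z f = - (\<Sum>c\<in>UNIV. (1 - f (fst z) $ c) * ln (f (fst z) $ c) * snd z $ c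
                         + f (fst z) $ c * ln (1 - f (fst z) $ c) * (1 - snd z $ c))"

definition mia_thr :: "('z \<Rightarrow> 'f \<Rightarrow> real) \<Rightarrow> real \<Rightarrow> 'z \<Rightarrow> 'f \<Rightarrow> nat" where
  "mia_thr h \<tau> z f = (if h z f < \<tau> then 1 else 0)"

definition prob_S :: "'z multiset \<Rightarrow> ('z \<Rightarrow> bool) \<Rightarrow> real" where
  "prob_S S P = real (size (filter_mset P S)) / real (size S)"

definition prob_D :: "'z measure \<Rightarrow> ('z \<Rightarrow> bool) \<Rightarrow> real" where
  "prob_D D P = measure D {z \<in> space D. P z}"

definition Adv :: "('z \<Rightarrow> 'f \<Rightarrow> nat) \<Rightarrow> 'f \<Rightarrow> 'z multiset \<Rightarrow> 'z measure \<Rightarrow> real" where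
  "Adv m f S D = prob_S S (\<lambda>z. m z f = 1) - prob_D D (\<lambda>z. m z f = 1)"

definition Dist :: "('x \<Rightarrow> real^'c::finite) \<Rightarrow> ('x \<times> (real^'c)) multiset \<Rightarrow> ('x \<times> (real^'c)) measure
                   \<Rightarrow> ((real^'c) \<times> (real^'c)) set \<Rightarrow> real" where
  "Dist f S D Q = \<bar>prob_S S (\<lambda>(x,y). (f x, y) \<in> Q) - prob_D D (\<lambda>(x,y). (f x, y) \<in> Q)\<bar>"

definition Dist_fam :: "((real^'c::finite) \<times> (real^'c)) set set \<Rightarrow> ('x \<Rightarrow> real^'c)
                   \<Rightarrow> ('x \<times> (real^'c)) multiset \<Rightarrow> ('x \<times> (real^'c)) measure \<Rightarrow> real" where
  "Dist_fam \<Q> f S D = (SUP Q\<in>\<Q>. Dist f S D Q)"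

definition Q_cvx :: "((real^'c::finite) \<times> (real^'c)) set set" where
  "Q_cvx = {Q. convex Q \<and> Q \<in> sets borel}"

end

theory Submission
  imports Defs
begin

lemma prob_S_bounds:
  assumes "S \<noteq> {#}" shows "0 \<le> prob_S S P" "prob_S S P \<le> 1"
proof -
  have "size (filter_mset P S) \<le> size S" by (rule size_filter_mset_lesseq)
  moreover have "size S > 0" using assms by (simp add: nonempty_has_size)
  ultimately show "0 \<le> prob_S S P" "prob_S S P \<le> 1" unfolding prob_S_def
    by (auto simp: divide_le_eq_1)
qed

lemma prob_S_compl:
  assumes "S \<noteq> {#}" shows "prob_S S (\<lambda>z. \<not> P z) = 1 - prob_S S P"
proof -
  have "size S = size (filter_mset P S) + size (filter_mset (\<lambda>z. \<not> P z) S)"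
    by (metis multiset_partition size_union)
  moreover have "size S > 0" using assms by (simp add: nonempty_has_size)
  moreover have "\<And>a b n::real. n = a + b \<Longrightarrow> n > 0 \<Longrightarrow> b / n = 1 - a / n"
    by (simp add: field_simps)
  ultimately show ?thesis unfolding prob_S_def
    by (metis of_nat_0_less_iff of_nat_add)
qed

lemma prob_D_bounds:
  assumes "prob_space D" shows "0 \<le> prob_D D P" "prob_D D P \<le> 1"
  unfolding prob_D_def using prob_space.prob_le_1[OF assms] by auto

lemma Dist_le_1:
  assumes "S \<noteq> {#}" "prob_space D" shows "Dist f S D Q \<le> 1"
  unfolding Dist_def using prob_S_bounds[OF assms(1)] prob_D_bounds[OF assms(2)]
  by (smt (verit))

lemma Dist_le_fam:
  assumes "S \<noteq> {#}" "prob_space D" "Q \<in> Q_cvx"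
  shows "Dist f S D Q \<le> Dist_fam Q_cvx f S D"
  unfolding Dist_fam_def
  by (rule cSUP_upper[OF assms(3)]) (auto intro!: bdd_aboveI[where M=1] Dist_le_1 assms)

lemma direct:
  assumes "S \<noteq> {#}" "prob_space D" "Q \<in> Q_cvx"
    and "\<forall>z\<in>#S. P z = ((f (fst z), snd z) \<in> Q)"
    and "\<forall>z\<in>space D. P z = ((f (fst z), snd z) \<in> Q)"
  shows "prob_S S P - prob_D D P \<le> Dist_fam Q_cvx f S D"
proof -
  have "filter_mset P S = filter_mset (\<lambda>(x,y). (f x, y) \<in> Q) S"
  proof (rule filter_mset_cong0)
    fix z assume "z \<in># S"
    then have "P z = ((f (fst z), snd z) \<in> Q)" using assms(4) by blast
    then show "P z = (case z of (x,y) \<Rightarrow> (f x, y) \<in> Q)" by (cases z) simp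
  qed
  then have 1: "prob_S S P = prob_S S (\<lambda>(x,y). (f x, y) \<in> Q)"
    unfolding prob_S_def by simp
  have "{z\<in>space D. P z} = {z\<in>space D. (\<lambda>(x,y). (f x, y) \<in> Q) z}"
    using assms(5) by (auto simp: case_prod_beta)
  then have 2: "prob_D D P = prob_D D (\<lambda>(x,y). (f x, y) \<in> Q)"
    unfolding prob_D_def by simp
  have "prob_S S P - prob_D D P \<le> Dist f S D Q" unfolding Dist_def 1 2 by simp
  also have "\<dots> \<le> Dist_fam Q_cvx f S D" by (rule Dist_le_fam[OF assms(1-3)])
  finally show ?thesis .
qed

lemma compl:
  assumes "S \<noteq> {#}" "prob_space D" "Q \<in> Q_cvx"
    and meas: "(\<lambda>z. (f (fst z), snd z)) \<in> D \<rightarrow>\<^sub>M borel"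
    and "\<forall>z\<in>#S. P z = ((f (fst z), snd z) \<notin> Q)"
    and "\<forall>z\<in>space D. P z = ((f (fst z), snd z) \<notin> Q)"
  shows "prob_S S P - prob_D D P \<le> Dist_fam Q_cvx f S D"
proof -
  let ?R = "\<lambda>(x,y). (f x, y) \<in> Q"
  have "filter_mset P S = filter_mset (\<lambda>z. \<not> ?R z) S"
  proof (rule filter_mset_cong0)
    fix z assume "z \<in># S"
    then have "P z = ((f (fst z), snd z) \<notin> Q)" using assms(5) by blast
    then show "P z = (\<not> (case z of (x,y) \<Rightarrow> (f x, y) \<in> Q))" by (cases z) simp
  qed
  then have "prob_S S P = prob_S S (\<lambda>z. \<not> ?R z)"
    unfolding prob_S_def by simp
  also have "\<dots> = 1 - prob_S S ?R" by (rule prob_S_compl[OF assms(1)])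
  finally have 1: "prob_S S P = 1 - prob_S S ?R" .
  have Qb: "Q \<in> sets borel" using assms(3) unfolding Q_cvx_def by auto
  have Rm: "{z \<in> space D. ?R z} \<in> sets D"
  proof -
    have "{z \<in> space D. ?R z} = (\<lambda>z. (f (fst z), snd z)) -` Q \<inter> space D"
      by (auto simp: case_prod_beta)
    then show ?thesis using measurable_sets[OF meas Qb] by simp
  qed
  have "{z \<in> space D. P z} = space D - {z \<in> space D. ?R z}"
  proof (intro set_eqI iffI)
    fix z assume "z \<in> {z \<in> space D. P z}"
    then show "z \<in> space D - {z \<in> space D. ?R z}" using assms(6) by (cases z) auto
  next
    fix z assume "z \<in> space D - {z \<in> space D. ?R z}"
    then show "z \<in> {z \<in> space D. P z}" using assms(6) by (cases z) auto
  qed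
  then have 2: "prob_D D P = 1 - prob_D D ?R"
    unfolding prob_D_def using prob_space.prob_compl[OF assms(2) Rm] by simp
  have "prob_S S P - prob_D D P \<le> Dist f S D Q" unfolding Dist_def 1 2 by simp
  also have "\<dots> \<le> Dist_fam Q_cvx f S D" by (rule Dist_le_fam[OF assms(1-3)])
  finally show ?thesis .
qed

lemma one_hot_axis:
  fixes y :: "real^'c::finite"
  assumes "one_hot y" shows "\<exists>k. y = axis k 1"
proof -
  have y01: "\<And>c. y$c = 0 \<or> y$c = 1" and s: "(\<Sum>c\<in>UNIV. y$c) = 1" using assms unfolding one_hot_def by auto
  obtain k where k: "y$k = 1"
  proof (rule ccontr)
    assume "\<not> thesis" then have "\<forall>c. y$c = 0" using y01 that by blast
    then show False using s by simp
  qed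
  have "(\<Sum>c\<in>UNIV. y$c) = y$k + (\<Sum>c\<in>UNIV-{k}. y$c)" by (simp add: sum.remove)
  then have "(\<Sum>c\<in>UNIV-{k}. y$c) = 0" using s k by simp
  moreover have "\<forall>c\<in>UNIV-{k}. 0 \<le> y$c" using y01 by (metis order.refl zero_le_one)
  ultimately have "\<forall>c\<in>UNIV-{k}. y$c = 0" using sum_nonneg_eq_0_iff[of "UNIV-{k}" "\<lambda>c. y$c"] by auto
  then have "y = axis k 1" using k by (auto simp: axis_def vec_eq_iff)
  then show ?thesis ..
qed
lemma limit_lemma:
  fixes h :: "(real^'c::finite) \<times> (real^'c) \<Rightarrow> real"
  assumes S: "S \<noteq> {#}" and D: "prob_space D"
    and meas: "(\<lambda>z. (f (fst z), snd z)) \<in> D \<rightarrow>\<^sub>M borel"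
    and hm: "h \<in> borel_measurable borel"
    and hS: "\<forall>z\<in>#S. one_hot (snd z)" and hD: "\<forall>z\<in>space D. one_hot (snd z)"
    and EX: "\<And>n::nat. \<exists>Q\<in>Q_cvx. \<forall>z. one_hot (snd z) \<longrightarrow>
               (h (f (fst z), snd z) \<le> \<tau> - 1/(real n+1) \<longleftrightarrow> (f (fst z), snd z) \<in> Q)"
  shows "prob_S S (\<lambda>z. h (f (fst z), snd z) < \<tau>) - prob_D D (\<lambda>z. h (f (fst z), snd z) < \<tau>)
           \<le> Dist_fam Q_cvx f S D"
proof -
  let ?g = "\<lambda>z. h (f (fst z), snd z)"
  define V where "V = (\<lambda>z. \<tau> - ?g z) ` {z \<in> set_mset S. ?g z < \<tau>}"
  define \<delta> where "\<delta> = Min (insert 1 V)"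
  have fV: "finite V" unfolding V_def by simp
  have dpos: "\<delta> > 0" unfolding \<delta>_def using fV by (auto simp: V_def)
  obtain n where n: "inverse (real (Suc n)) < \<delta>" using reals_Archimedean[OF dpos] by blast
  have nn: "1/(real n+1) < \<delta>" "0 < 1/(real n+1)" using n by (auto simp: inverse_eq_divide add.commute)
  let ?Pn = "\<lambda>z. ?g z \<le> \<tau> - 1/(real n+1)"
  have eqS: "prob_S S (\<lambda>z. ?g z < \<tau>) = prob_S S ?Pn"
    unfolding prob_S_def
  proof (intro arg_cong[where f="\<lambda>x. real (size x) / real (size S)"] filter_mset_cong refl)
    fix z assume z: "z \<in># S"
    show "(?g z < \<tau>) = ?Pn z"
    proof
      assume lt: "?g z < \<tau>"
      then have "\<tau> - ?g z \<in> V" unfolding V_def using z by auto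
      then have "\<delta> \<le> \<tau> - ?g z" unfolding \<delta>_def using fV by auto
      then show "?Pn z" using nn by linarith
    next
      assume "?Pn z" then show "?g z < \<tau>" using nn by linarith
    qed
  qed
  have gm: "?g \<in> borel_measurable D" using measurable_comp[OF meas hm] by (simp add: comp_def)
  have Pm: "{z \<in> space D. ?g z < \<tau>} \<in> sets D"
    using gm by measurable
  have monoD: "prob_D D ?Pn \<le> prob_D D (\<lambda>z. ?g z < \<tau>)"
    unfolding prob_D_def
    by (rule finite_measure.finite_measure_mono[OF prob_space.finite_measure[OF D] _ Pm])
       (use nn in \<open>auto simp del: of_nat_Suc\<close>, smt (verit) nn(2))
  obtain Q where Q: "Q \<in> Q_cvx" and HQ: "\<forall>z. one_hot (snd z) \<longrightarrow> (?Pn z \<longleftrightarrow> (f (fst z), snd z) \<in> Q)"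
    using EX[of n] by blast
  have "prob_S S ?Pn - prob_D D ?Pn \<le> Dist_fam Q_cvx f S D"
    by (rule direct[OF S D Q]) (use HQ hS hD in auto)
  then show ?thesis using eqS monoD by linarith
qed
lemma infdist_convex:
  fixes C :: "'a::real_normed_vector set"
  assumes "convex C" "0 \<le> u" "0 \<le> v" "u + v = 1"
  shows "infdist (u *\<^sub>R x + v *\<^sub>R y) C \<le> u * infdist x C + v * infdist y C"
proof (cases "C = {}")
  case True then show ?thesis by (simp add: infdist_def)
next
  case False
  show ?thesis
  proof (rule field_le_epsilon)
    fix e :: real assume e: "0 < e"
    have bb: "bdd_below ((\<lambda>a. dist z a) ` C)" for z by (rule bdd_belowI[where m=0]) auto
    have "(INF a\<in>C. dist x a) < infdist x C + e" using e False by (simp add: infdist_notempty)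
    then obtain a where a: "a \<in> C" "dist x a < infdist x C + e"
      using cINF_less_iff[OF False bb] by blast
    have "(INF a\<in>C. dist y a) < infdist y C + e" using e False by (simp add: infdist_notempty)
    then obtain b where b: "b \<in> C" "dist y b < infdist y C + e"
      using cINF_less_iff[OF False bb] by blast
    have abC: "u *\<^sub>R a + v *\<^sub>R b \<in> C" using convexD[OF assms(1) a(1) b(1) assms(2-4)] .
    have "infdist (u *\<^sub>R x + v *\<^sub>R y) C \<le> dist (u *\<^sub>R x + v *\<^sub>R y) (u *\<^sub>R a + v *\<^sub>R b)"
      by (rule infdist_le[OF abC])
    also have "\<dots> = norm (u *\<^sub>R (x - a) + v *\<^sub>R (y - b))"
      by (simp add: dist_norm algebra_simps)
    also have "\<dots> \<le> u * dist x a + v * dist y b"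
      using norm_triangle_ineq[of "u *\<^sub>R (x - a)" "v *\<^sub>R (y - b)"] assms(2,3)
      by (simp add: dist_norm)
    also have "\<dots> \<le> u * (infdist x C + e) + v * (infdist y C + e)"
      using a b assms(2,3) by (intro add_mono mult_left_mono) auto
    also have "\<dots> = u * infdist x C + v * infdist y C + e"
    proof -
      have "u * (infdist x C + e) + v * (infdist y C + e) = u * infdist x C + v * infdist y C + (u + v) * e"
        by (simp add: algebra_simps)
      then show ?thesis using assms(4) by simp
    qed
    finally show "infdist (u *\<^sub>R x + v *\<^sub>R y) C \<le> u * infdist x C + v * infdist y C + e" .
  qed
qed

lemma coord_sum_convex:
  fixes g :: "'c::finite \<Rightarrow> real \<Rightarrow> real"
  assumes "\<And>c. convex_on I (g c)" "convex I"
  shows "convex_on {p::real^'c. \<forall>c. p$c \<in> I} (\<lambda>p. \<Sum>c\<in>UNIV. g c (p$c))"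
  unfolding convex_on_def
proof (intro conjI ballI allI impI)
  show cv: "convex {p::real^'c. \<forall>c. p$c \<in> I}"
  proof (rule convexI)
    fix x y :: "real^'c" and u v :: real
    assume "x \<in> {p. \<forall>c. p$c \<in> I}" "y \<in> {p. \<forall>c. p$c \<in> I}" "0 \<le> u" "0 \<le> v" "u + v = 1"
    then show "u *\<^sub>R x + v *\<^sub>R y \<in> {p. \<forall>c. p$c \<in> I}"
      using convexD[OF assms(2)] by auto
  qed
  fix x y :: "real^'c" and u v :: real
  assume x: "x \<in> {p. \<forall>c. p$c \<in> I}" and y: "y \<in> {p. \<forall>c. p$c \<in> I}" and uv: "0 \<le> u" "0 \<le> v" "u + v = 1"
  have "(\<Sum>c\<in>UNIV. g c ((u *\<^sub>R x + v *\<^sub>R y)$c)) \<le> (\<Sum>c\<in>UNIV. u * g c (x$c) + v * g c (y$c))"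
  proof (rule sum_mono)
    fix c
    have "(u *\<^sub>R x + v *\<^sub>R y)$c = u *\<^sub>R (x$c) + v *\<^sub>R (y$c)" by simp
    moreover have "g c (u *\<^sub>R (x$c) + v *\<^sub>R (y$c)) \<le> u * g c (x$c) + v * g c (y$c)"
      using assms(1)[of c] x y uv unfolding convex_on_def by blast
    ultimately show "g c ((u *\<^sub>R x + v *\<^sub>R y)$c) \<le> u * g c (x$c) + v * g c (y$c)" by simp
  qed
  also have "\<dots> = u * (\<Sum>c\<in>UNIV. g c (x$c)) + v * (\<Sum>c\<in>UNIV. g c (y$c))"
    by (simp add: sum.distrib sum_distrib_left)
  finally show "(\<Sum>c\<in>UNIV. g c ((u *\<^sub>R x + v *\<^sub>R y)$c)) \<le> u * (\<Sum>c\<in>UNIV. g c (x$c)) + v * (\<Sum>c\<in>UNIV. g c (y$c))" .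
qed

lemma convex_sublevel:
  fixes g :: "'a::real_vector \<Rightarrow> real"
  assumes "convex_on S g" shows "convex {p \<in> S. g p \<le> t}"
proof (rule convexI)
  fix x y and u v :: real assume x: "x \<in> {p \<in> S. g p \<le> t}" and y: "y \<in> {p \<in> S. g p \<le> t}"
    and uv: "0 \<le> u" "0 \<le> v" "u + v = 1"
  have S: "convex S" using assms by (simp add: convex_on_def)
  have "g (u *\<^sub>R x + v *\<^sub>R y) \<le> u * g x + v * g y"
    using assms x y uv unfolding convex_on_def by blast
  also have "\<dots> \<le> u * t + v * t" using x y uv by (intro add_mono mult_left_mono) auto
  also have "\<dots> = t" using uv by (metis distrib_right mult_1)
  finally show "u *\<^sub>R x + v *\<^sub>R y \<in> {p \<in> S. g p \<le> t}" using convexD[OF S] x y uv by auto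
qed

lemma cvx_A: "convex_on {0<..<1::real} (\<lambda>x. - ((1 - x) * ln x))"
proof (rule convex_on_realI[where f'="\<lambda>x. ln x - 1/x + 1"])
  show "connected {0<..<1::real}" by simp
  fix x :: real assume x: "x \<in> {0<..<1}"
  show "((\<lambda>x. - ((1 - x) * ln x)) has_real_derivative ln x - 1/x + 1) (at x)"
    using x by (auto intro!: derivative_eq_intros simp: field_simps)
next
  fix x y :: real assume "x \<in> {0<..<1}" "y \<in> {0<..<1}" "x \<le> y"
  then have "ln x \<le> ln y" "1/y \<le> 1/x" by (auto simp: divide_simps)
  then show "ln x - 1/x + 1 \<le> ln y - 1/y + 1" by linarith
qed

lemma cvx_B: "convex_on {0<..<1::real} (\<lambda>x. - (x * ln (1 - x)))"
proof (rule convex_on_realI[where f'="\<lambda>x. - ln (1 - x) + 1/(1-x) - 1"])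
  show "connected {0<..<1::real}" by simp
  fix x :: real assume x: "x \<in> {0<..<1}"
  show "((\<lambda>x. - (x * ln (1 - x))) has_real_derivative - ln (1 - x) + 1/(1-x) - 1) (at x)"
    using x by (auto intro!: derivative_eq_intros simp: field_simps)
next
  fix x y :: real assume "x \<in> {0<..<1}" "y \<in> {0<..<1}" "x \<le> y"
  then have "ln (1-y) \<le> ln (1-x)" "1/(1-x) \<le> 1/(1-y)" by (auto simp: divide_simps)
  then show "- ln (1 - x) + 1/(1-x) - 1 \<le> - ln (1 - y) + 1/(1-y) - 1" by linarith
qed

lemma cvx_xlnx: "convex_on {(0::real)<..} (\<lambda>x. x * ln x)"
proof (rule convex_on_realI[where f'="\<lambda>x. ln x + 1"])
  show "connected {(0::real)<..}" by simp
  fix x :: real assume x: "x \<in> {0<..}"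
  show "((\<lambda>x. x * ln x) has_real_derivative ln x + 1) (at x)"
    using x by (auto intro!: derivative_eq_intros simp: field_simps)
next
  fix x y :: real assume "x \<in> {0<..}" "y \<in> {0<..}" "x \<le> y"
  then show "ln x + 1 \<le> ln y + 1" by auto
qed
definition boxo :: "(real^'c::finite) set" where "boxo = {p. \<forall>c. p$c \<in> {0<..<1}}"

lemma open_boxo: "open (boxo :: (real^'c::finite) set)"
proof -
  have "boxo = (\<Inter>c\<in>(UNIV::'c set). {p::real^'c. 0 < p$c \<and> p$c < 1})" by (auto simp: boxo_def)
  moreover have "open (\<Inter>c\<in>(UNIV::'c set). {p::real^'c. 0 < p$c \<and> p$c < 1})"
    by (intro open_INT finite_UNIV ballI open_Collect_conj open_Collect_less continuous_intros) auto
  ultimately show ?thesis by simp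
qed

lemma closure_boxo_le:
  fixes G :: "real^'c::finite \<Rightarrow> real"
  assumes cont: "continuous_on boxo G" and p: "p \<in> boxo"
    and cl: "p \<in> closure {q\<in>boxo. G q \<le> t}"
  shows "G p \<le> t"
proof -
  obtain s where s: "\<And>n. s n \<in> {q\<in>boxo. G q \<le> t}" and lim: "s \<longlonglongrightarrow> p"
    using cl unfolding closure_sequential by blast
  have "(\<lambda>n. G (s n)) \<longlonglongrightarrow> G p"
    using continuous_on_tendsto_compose[OF cont lim p] s by (auto simp: comp_def)
  moreover have "\<forall>n. G (s n) \<le> t" using s by auto
  ultimately show ?thesis by (meson LIMSEQ_le_const2)
qed

lemma gated:
  fixes F :: "real^'c::finite \<Rightarrow> real^'c \<Rightarrow> real" and t :: real
  assumes cvx: "\<And>k. convex_on boxo (F (axis k 1))"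
    and cont: "\<And>k. continuous_on boxo (F (axis k 1))"
  shows "\<exists>Q\<in>Q_cvx. \<forall>p y. p \<in> boxo \<longrightarrow> one_hot y \<longrightarrow> ((p,y) \<in> Q \<longleftrightarrow> F y p \<le> t)"
proof -
  define C where "C k = {p\<in>boxo. F (axis k 1) p \<le> t}" for k
  define M where "M = real CARD('c)"
  define Qk where "Qk k = (if C k = {} then {z::(real^'c)\<times>(real^'c). snd z $ k \<le> 0}
                            else {z. infdist (fst z) (C k) \<le> M * (1 - snd z $ k)})" for k
  define Q where "Q = (\<Inter>k\<in>UNIV. Qk k)"
  have Ccvx: "convex (C k)" for k unfolding C_def by (rule convex_sublevel[OF cvx])
  have Qkcvx: "convex (Qk k)" for k
  proof (cases "C k = {}")
    case True
    show ?thesis unfolding Qk_def using True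
    proof (simp, intro convexI)
      fix z1 z2 :: "(real^'c)\<times>(real^'c)" and u v :: real
      assume "z1 \<in> {z. snd z $ k \<le> 0}" "z2 \<in> {z. snd z $ k \<le> 0}" "0 \<le> u" "0 \<le> v" "u + v = 1"
      then show "u *\<^sub>R z1 + v *\<^sub>R z2 \<in> {z. snd z $ k \<le> 0}"
        by (simp add: add_nonpos_nonpos mult_nonneg_nonpos)
    qed
  next
    case False
    show ?thesis unfolding Qk_def using False
    proof (simp, intro convexI)
      fix z1 z2 :: "(real^'c)\<times>(real^'c)" and u v :: real
      assume z: "z1 \<in> {z. infdist (fst z) (C k) \<le> M * (1 - snd z $ k)}"
        "z2 \<in> {z. infdist (fst z) (C k) \<le> M * (1 - snd z $ k)}" and uv: "0 \<le> u" "0 \<le> v" "u + v = 1"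
      have "infdist (fst (u *\<^sub>R z1 + v *\<^sub>R z2)) (C k) = infdist (u *\<^sub>R fst z1 + v *\<^sub>R fst z2) (C k)"
        by simp
      also have "\<dots> \<le> u * infdist (fst z1) (C k) + v * infdist (fst z2) (C k)"
        by (rule infdist_convex[OF Ccvx uv])
      also have "\<dots> \<le> u * (M * (1 - snd z1 $ k)) + v * (M * (1 - snd z2 $ k))"
        using z uv by (intro add_mono mult_left_mono) auto
      also have "\<dots> = M * ((u + v) - (u * snd z1 $ k + v * snd z2 $ k))"
        by (simp add: algebra_simps)
      also have "\<dots> = M * (1 - snd (u *\<^sub>R z1 + v *\<^sub>R z2) $ k)" using uv by simp
      finally show "u *\<^sub>R z1 + v *\<^sub>R z2 \<in> {z. infdist (fst z) (C k) \<le> M * (1 - snd z $ k)}" by simp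
    qed
  qed
  have Qkcl: "closed (Qk k)" for k
    unfolding Qk_def by (auto intro!: closed_Collect_le continuous_intros)
  have QQ: "Q \<in> Q_cvx" unfolding Q_cvx_def Q_def
    using Qkcvx Qkcl by (auto intro!: convex_INT closed_INT borel_closed)
  have main: "(p,y) \<in> Q \<longleftrightarrow> F y p \<le> t" if p: "p \<in> boxo" and y: "one_hot y" for p y
  proof -
    obtain j where j: "y = axis j 1" using one_hot_axis[OF y] by blast
    have other: "(p,y) \<in> Qk k" if kj: "k \<noteq> j" for k
    proof (cases "C k = {}")
      case True then show ?thesis unfolding Qk_def using kj j by (simp add: axis_def)
    next
      case False
      then obtain q where q: "q \<in> C k" by blast
      have "infdist p (C k) \<le> dist p q" by (rule infdist_le[OF q])
      also have "\<dots> \<le> (\<Sum>c\<in>UNIV. \<bar>(p - q)$c\<bar>)" unfolding dist_norm by (rule norm_le_l1_cart)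
      also have "\<dots> \<le> (\<Sum>c\<in>(UNIV::'c set). (1::real))"
      proof (rule sum_mono)
        fix c
        have "p$c \<in> {0<..<1}" "q$c \<in> {0<..<1}" using p q by (auto simp: boxo_def C_def)
        then show "\<bar>(p - q)$c\<bar> \<le> 1" by auto
      qed
      also have "\<dots> = M" by (simp add: M_def)
      finally show ?thesis unfolding Qk_def using False kj j by (simp add: axis_def)
    qed
    have "(p,y) \<in> Q \<longleftrightarrow> (p,y) \<in> Qk j" unfolding Q_def
    proof
      assume "(p,y) \<in> Qk j" then show "(p,y) \<in> (\<Inter>k\<in>UNIV. Qk k)"
        using other by (metis INT_I)
    qed blast
    also have "\<dots> \<longleftrightarrow> p \<in> C j"
    proof (cases "C j = {}")
      case True then show ?thesis unfolding Qk_def using j by (simp add: axis_def)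
    next
      case False
      have "(p,y) \<in> Qk j \<longleftrightarrow> infdist p (C j) \<le> 0" unfolding Qk_def using False j by (simp add: axis_def)
      also have "\<dots> \<longleftrightarrow> infdist p (C j) = 0" using infdist_nonneg[of p "C j"] by linarith
      also have "\<dots> \<longleftrightarrow> p \<in> closure (C j)" using in_closure_iff_infdist_zero[OF False] by simp
      also have "\<dots> \<longleftrightarrow> p \<in> C j"
      proof
        assume "p \<in> closure (C j)"
        then have "F (axis j 1) p \<le> t" using closure_boxo_le[OF cont p] unfolding C_def by blast
        then show "p \<in> C j" using p unfolding C_def by simp
      qed (rule closure_subset[THEN subsetD])
      finally show ?thesis .
    qed
    also have "\<dots> \<longleftrightarrow> F y p \<le> t" using p j unfolding C_def by simp
    finally show ?thesis .
  qed
  show ?thesis using QQ main by blast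
qed
definition Fme :: "real^'c::finite \<Rightarrow> real^'c \<Rightarrow> real" where
  "Fme y p = - (\<Sum>c\<in>UNIV. (1 - p $ c) * ln (p $ c) * y $ c + p $ c * ln (1 - p $ c) * (1 - y $ c))"

lemma meas_fst_nth[measurable]: "(\<lambda>x::(real^'c::finite)\<times>(real^'c). fst x $ c) \<in> borel_measurable borel"
  by (intro borel_measurable_continuous_onI continuous_intros)
lemma meas_snd_nth[measurable]: "(\<lambda>x::(real^'c::finite)\<times>(real^'c). snd x $ c) \<in> borel_measurable borel"
  by (intro borel_measurable_continuous_onI continuous_intros)

lemma Fme_meas: "(\<lambda>z::(real^'c::finite)\<times>(real^'c). Fme (snd z) (fst z)) \<in> borel_measurable borel"
  unfolding Fme_def by measurable

definition gme :: "'c \<Rightarrow> 'c \<Rightarrow> real \<Rightarrow> real" where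
  "gme k c x = (if c = k then - ((1 - x) * ln x) else - (x * ln (1 - x)))"

lemma Fme_axis: "Fme (axis k 1) p = (\<Sum>c\<in>UNIV. gme k c (p $ c))"
  unfolding Fme_def sum_negf[symmetric]
  by (rule sum.cong) (auto simp: gme_def axis_def)

lemma Fme_cvx: "convex_on boxo (Fme (axis k 1 :: real^'c::finite))"
proof -
  have "convex_on {p::real^'c. \<forall>c. p$c \<in> {0<..<1}} (\<lambda>p. \<Sum>c\<in>UNIV. gme k c (p$c))"
  proof (rule coord_sum_convex)
    fix c show "convex_on {0<..<1} (gme k c)"
      using cvx_A cvx_B by (cases "c = k") (auto simp: gme_def[abs_def])
  qed simp
  then show ?thesis unfolding boxo_def Fme_axis[abs_def] .
qed

lemma Fme_cont: "continuous_on boxo (Fme (axis k 1 :: real^'c::finite))"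
proof -
  have "continuous_on boxo (\<lambda>p::real^'c. gme k c (p$c))" for c
    by (cases "c = k") (auto simp: gme_def boxo_def intro!: continuous_intros, (metis less_irrefl)+)
  then have "continuous_on boxo (\<lambda>p::real^'c. \<Sum>c\<in>UNIV. gme k c (p$c))"
    by (intro continuous_on_sum) auto
  then show ?thesis unfolding Fme_axis[abs_def] .
qed

lemma mia_eq: "(\<lambda>z. mia_thr h \<tau> z f = 1) = (\<lambda>z. h z f < \<tau>)"
  by (auto simp: mia_thr_def)

theorem theorem1:
  fixes f :: "'x \<Rightarrow> real^'c::finite"
    and S :: "('x \<times> (real^'c)) multiset"
    and D :: "('x \<times> (real^'c)) measure"
    and \<tau> :: real
  assumes "CARD('c) \<ge> 2"
    and fb: "\<And>x c. 0 < f x $ c \<and> f x $ c < 1"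
    and "\<And>x. (\<Sum>c\<in>UNIV. f x $ c) = 1"
    and S: "S \<noteq> {#}"
    and hS: "\<forall>z\<in>#S. one_hot (snd z)"
    and D: "prob_space D"
    and hD: "\<forall>z\<in>space D. one_hot (snd z)"
    and meas: "(\<lambda>z. (f (fst z), snd z)) \<in> D \<rightarrow>\<^sub>M borel"
    and "m \<in> {mia_thr msp \<tau>, mia_thr ent \<tau>, mia_thr ce \<tau>, mia_thr me \<tau>}"
  shows "Adv m f S D \<le> Dist_fam Q_cvx f S D"
proof -
  have fbox: "f x \<in> boxo" for x using fb by (auto simp: boxo_def)
  have msp_case: "Adv (mia_thr msp \<tau>) f S D \<le> Dist_fam Q_cvx f S D"
  proof -
    define Q where "Q = {p::real^'c. \<forall>c. p$c \<le> - \<tau>} \<times> (UNIV :: (real^'c) set)"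
    have c1: "convex {p::real^'c. \<forall>c. p$c \<le> - \<tau>}"
    proof (rule convexI)
      fix x y :: "real^'c" and u v :: real
      assume "x \<in> {p. \<forall>c. p$c \<le> - \<tau>}" "y \<in> {p. \<forall>c. p$c \<le> - \<tau>}" "0 \<le> u" "0 \<le> v" "u + v = 1"
      then show "u *\<^sub>R x + v *\<^sub>R y \<in> {p. \<forall>c. p$c \<le> - \<tau>}"
        using convexD[OF convex_real_interval(2)[of "- \<tau>"]] by auto
    qed
    have "{p::real^'c. \<forall>c. p$c \<le> - \<tau>} = (\<Inter>c\<in>(UNIV::'c set). {p. p$c \<le> - \<tau>})" by auto
    moreover have "closed (\<Inter>c\<in>(UNIV::'c set). {p::real^'c. p$c \<le> - \<tau>})"
      by (intro closed_INT ballI closed_Collect_le continuous_intros)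
    ultimately have c2: "closed {p::real^'c. \<forall>c. p$c \<le> - \<tau>}" by simp
    have QQ: "Q \<in> Q_cvx" unfolding Q_cvx_def Q_def
      using c1 c2 by (auto intro!: convex_Times borel_closed closed_Times)
    have eq: "msp z f < \<tau> \<longleftrightarrow> (f (fst z), snd z) \<notin> Q" for z
    proof -
      have "msp z f < \<tau> \<longleftrightarrow> \<not> (MAX c. f (fst z) $ c) \<le> - \<tau>" unfolding msp_def by linarith
      also have "\<dots> \<longleftrightarrow> \<not> (\<forall>c. f (fst z) $ c \<le> - \<tau>)" by (simp add: Max_le_iff)
      finally show ?thesis unfolding Q_def by simp
    qed
    show ?thesis unfolding Adv_def mia_eq
      by (rule compl[OF S D QQ meas]) (use eq in auto)
  qed
  have ent_case: "Adv (mia_thr ent \<tau>) f S D \<le> Dist_fam Q_cvx f S D"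
  proof -
    define P where "P = {p \<in> {p::real^'c. \<forall>c. p$c \<in> {0<..}}. (\<Sum>c\<in>UNIV. p$c * ln (p$c)) \<le> - \<tau>}"
    define Q where "Q = P \<times> (UNIV :: (real^'c) set)"
    have c1: "convex P" unfolding P_def
      by (intro convex_sublevel coord_sum_convex cvx_xlnx) simp
    have Qe: "Q = {z::(real^'c)\<times>(real^'c). (\<forall>c. 0 < fst z $ c) \<and> (\<Sum>c\<in>UNIV. fst z $ c * ln (fst z $ c)) \<le> - \<tau>}"
      unfolding Q_def P_def by auto
    have Qb: "Q \<in> sets borel" unfolding Qe by measurable
    have Qc: "convex Q" unfolding Q_def by (intro convex_Times c1 convex_UNIV)
    have QQ: "Q \<in> Q_cvx" unfolding Q_cvx_def using Qb Qc by auto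
    have eq: "ent z f < \<tau> \<longleftrightarrow> (f (fst z), snd z) \<notin> Q" for z
      using fb[of "fst z"] unfolding ent_def Q_def P_def by auto
    show ?thesis unfolding Adv_def mia_eq
      by (rule compl[OF S D QQ meas]) (use eq in auto)
  qed
  have ce_case: "Adv (mia_thr ce \<tau>) f S D \<le> Dist_fam Q_cvx f S D"
  proof -
    define Q where "Q = {z::(real^'c)\<times>(real^'c). \<forall>c. exp (- \<tau>) * snd z $ c < fst z $ c}"
    have c1: "convex Q" unfolding Q_def
    proof (rule convexI)
      fix x y :: "(real^'c)\<times>(real^'c)" and u v :: real
      assume x: "x \<in> {z. \<forall>c. exp (- \<tau>) * snd z $ c < fst z $ c}"
        and y: "y \<in> {z. \<forall>c. exp (- \<tau>) * snd z $ c < fst z $ c}" and uv: "0 \<le> u" "0 \<le> v" "u + v = 1"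
      show "u *\<^sub>R x + v *\<^sub>R y \<in> {z. \<forall>c. exp (- \<tau>) * snd z $ c < fst z $ c}"
      proof (simp, intro allI)
        fix c
        have a: "exp (- \<tau>) * snd x $ c < fst x $ c" "exp (- \<tau>) * snd y $ c < fst y $ c" using x y by auto
        show "exp (- \<tau>) * (u * snd x $ c + v * snd y $ c) < u * fst x $ c + v * fst y $ c"
        proof (cases "u = 0")
          case True then have "v = 1" using uv by simp
          then show ?thesis using True a by simp
        next
          case False then have "u > 0" using uv by simp
          then have "u * (exp (- \<tau>) * snd x $ c) < u * fst x $ c" using a by simp
          moreover have "v * (exp (- \<tau>) * snd y $ c) \<le> v * fst y $ c" using a uv by (intro mult_left_mono) auto
          ultimately show ?thesis by (simp add: algebra_simps)
        qed
      qed
    qed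
    have "Q \<in> sets borel" unfolding Q_def by measurable
    then have QQ: "Q \<in> Q_cvx" unfolding Q_cvx_def using c1 by auto
    have eq: "ce z f < \<tau> \<longleftrightarrow> (f (fst z), snd z) \<in> Q" if oh: "one_hot (snd z)" for z
    proof -
      obtain k where k: "snd z = axis k 1" using one_hot_axis[OF oh] by blast
      let ?p = "f (fst z)"
      have pk: "0 < ?p $ c" for c using fb by auto
      have "(\<Sum>c\<in>UNIV. snd z $ c * ln (?p $ c)) = ln (?p $ k)"
      proof -
        have "(\<lambda>c. axis k 1 $ c * ln (?p $ c)) = (\<lambda>c. if c = k then ln (?p $ c) else 0)"
          by (auto simp: axis_def)
        then show ?thesis unfolding k by (simp only:) simp
      qed
      then have "ce z f < \<tau> \<longleftrightarrow> - \<tau> < ln (?p $ k)" unfolding ce_def by linarith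
      also have "\<dots> \<longleftrightarrow> exp (- \<tau>) < ?p $ k" using pk[of k] by (metis exp_less_cancel_iff exp_ln)
      also have "\<dots> \<longleftrightarrow> (\<forall>c. exp (- \<tau>) * snd z $ c < ?p $ c)"
        using pk unfolding k by (auto simp: axis_def)
      finally show ?thesis unfolding Q_def by simp
    qed
    show ?thesis unfolding Adv_def mia_eq
      by (rule direct[OF S D QQ]) (use eq hS hD in auto)
  qed
  have me_case: "Adv (mia_thr me \<tau>) f S D \<le> Dist_fam Q_cvx f S D"
  proof -
    let ?h = "\<lambda>z::(real^'c)\<times>(real^'c). Fme (snd z) (fst z)"
    have meq: "(\<lambda>z. me z f < \<tau>) = (\<lambda>z. ?h (f (fst z), snd z) < \<tau>)"
      by (auto simp: me_def Fme_def)
    have EX: "\<exists>Q\<in>Q_cvx. \<forall>z. one_hot (snd z) \<longrightarrow>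
               (?h (f (fst z), snd z) \<le> \<tau> - 1/(real n+1) \<longleftrightarrow> (f (fst z), snd z) \<in> Q)" for n
    proof -
      obtain Q :: "((real^'c) \<times> (real^'c)) set" where "Q \<in> Q_cvx" and HQ: "\<forall>p y. p \<in> boxo \<longrightarrow> one_hot y \<longrightarrow> ((p,y) \<in> Q \<longleftrightarrow> Fme y p \<le> \<tau> - 1/(real n+1))"
        using gated[where F="Fme :: real^'c \<Rightarrow> real^'c \<Rightarrow> real" and t="\<tau> - 1/(real n+1)", OF Fme_cvx Fme_cont] by blast
      then show ?thesis using fbox by auto
    qed
    show ?thesis unfolding Adv_def mia_eq meq
      by (rule limit_lemma[OF S D meas Fme_meas hS hD EX])
  qed
  show ?thesis using assms(9) msp_case ent_case ce_case me_case by auto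
qed

end
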